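(* For each $n\in\mathbb{N}$, $\mathrm{WR}(\Sigma_n\wedge\Pi_n)\vdash\mathrm{I}\Sigma_{n+1}$.
   Context: All theories contain $\mathrm{PA}^-$. $\Sigma_n\wedge\Pi_n$ is the class of formulas that are a conjunction of a $\Sigma_n$ and a $\Pi_n$ formula. For a formula $\phi(x,y)$ (possibly with further free variables), $\mathrm{WR}\phi$ is the universal closure of $\forall x\,\exists y<a\,\phi(x,y)\to\exists y<a\,\forall b\,\exists x>b\,\phi(x,y)$, and $\mathrm{WR}\Gamma=\mathrm{I}\Delta_0\cup\{\mathrm{WR}\phi:\phi\in\Gamma\}$. $\mathrm{I}\Sigma_k$ is the $\Sigma_k$-induction scheme. *)

theory Defs
  imports Main
begin

text \<open>Terms and formulas use de Bruijn indices. Bounded quantifiers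
  BEx t phi / BAll t phi stand for (exists x<t. phi) / (forall x<t. phi),
  where t is interpreted in the outer environment (so x does not occur in t)
  and phi in the environment extended by x (index 0).\<close>

datatype trm = Var nat | Zero | One | Plus trm trm | Times trm trm

datatype fm =
    Eq trm trm | Lt trm trm
  | Neg fm | Conj fm fm | Disj fm fm | Imp fm fm
  | Ex fm | All fm
  | BEx trm fm | BAll trm fm

record 'a str =
  zer :: 'a
  one :: 'a
  pls :: "'a \<Rightarrow> 'a \<Rightarrow> 'a"
  tms :: "'a \<Rightarrow> 'a \<Rightarrow> 'a"
  lss :: "'a \<Rightarrow> 'a \<Rightarrow> bool"

fun evt :: "'a str \<Rightarrow> (nat \<Rightarrow> 'a) \<Rightarrow> trm \<Rightarrow> 'a" where
  "evt M e (Var i) = e i"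
| "evt M e Zero = zer M"
| "evt M e One = one M"
| "evt M e (Plus s t) = pls M (evt M e s) (evt M e t)"
| "evt M e (Times s t) = tms M (evt M e s) (evt M e t)"

fun sat :: "'a str \<Rightarrow> (nat \<Rightarrow> 'a) \<Rightarrow> fm \<Rightarrow> bool" where
  "sat M e (Eq s t) = (evt M e s = evt M e t)"
| "sat M e (Lt s t) = lss M (evt M e s) (evt M e t)"
| "sat M e (Neg p) = (\<not> sat M e p)"
| "sat M e (Conj p q) = (sat M e p \<and> sat M e q)"
| "sat M e (Disj p q) = (sat M e p \<or> sat M e q)"
| "sat M e (Imp p q) = (sat M e p \<longrightarrow> sat M e q)"
| "sat M e (Ex p) = (\<exists>a. sat M (case_nat a e) p)"
| "sat M e (All p) = (\<forall>a. sat M (case_nat a e) p)"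
| "sat M e (BEx t p) = (\<exists>a. lss M a (evt M e t) \<and> sat M (case_nat a e) p)"
| "sat M e (BAll t p) = (\<forall>a. lss M a (evt M e t) \<longrightarrow> sat M (case_nat a e) p)"

inductive delta0 :: "fm \<Rightarrow> bool" where
  "delta0 (Eq s t)"
| "delta0 (Lt s t)"
| "delta0 p \<Longrightarrow> delta0 (Neg p)"
| "delta0 p \<Longrightarrow> delta0 q \<Longrightarrow> delta0 (Conj p q)"
| "delta0 p \<Longrightarrow> delta0 q \<Longrightarrow> delta0 (Disj p q)"
| "delta0 p \<Longrightarrow> delta0 q \<Longrightarrow> delta0 (Imp p q)"
| "delta0 p \<Longrightarrow> delta0 (BEx t p)"
| "delta0 p \<Longrightarrow> delta0 (BAll t p)"

inductive sigma :: "nat \<Rightarrow> fm \<Rightarrow> bool" and pi :: "nat \<Rightarrow> fm \<Rightarrow> bool" where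
  "delta0 p \<Longrightarrow> sigma n p"
| "delta0 p \<Longrightarrow> pi n p"
| "pi n p \<Longrightarrow> sigma (Suc n) p"
| "sigma n p \<Longrightarrow> pi (Suc n) p"
| "sigma (Suc n) p \<Longrightarrow> sigma (Suc n) (Ex p)"
| "pi (Suc n) p \<Longrightarrow> pi (Suc n) (All p)"

text \<open>PA^- : nonnegative parts of discretely ordered commutative rings (Kaye's axioms).\<close>
definition PAminus :: "'a str \<Rightarrow> bool" where
  "PAminus M \<longleftrightarrow>
    (\<forall>x y z. pls M (pls M x y) z = pls M x (pls M y z)) \<and>
    (\<forall>x y. pls M x y = pls M y x) \<and>
    (\<forall>x y z. tms M (tms M x y) z = tms M x (tms M y z)) \<and>
    (\<forall>x y. tms M x y = tms M y x) \<and>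
    (\<forall>x y z. tms M x (pls M y z) = pls M (tms M x y) (tms M x z)) \<and>
    (\<forall>x. pls M x (zer M) = x \<and> tms M x (zer M) = zer M) \<and>
    (\<forall>x. tms M x (one M) = x) \<and>
    (\<forall>x y z. lss M x y \<and> lss M y z \<longrightarrow> lss M x z) \<and>
    (\<forall>x. \<not> lss M x x) \<and>
    (\<forall>x y. lss M x y \<or> x = y \<or> lss M y x) \<and>
    (\<forall>x y z. lss M x y \<longrightarrow> lss M (pls M x z) (pls M y z)) \<and>
    (\<forall>x y z. lss M (zer M) z \<and> lss M x y \<longrightarrow> lss M (tms M x z) (tms M y z)) \<and>
    (\<forall>x y. lss M x y \<longrightarrow> (\<exists>z. pls M x z = y)) \<and>
    lss M (zer M) (one M) \<and>
    (\<forall>x. lss M (zer M) x \<longrightarrow> (lss M (one M) x \<or> one M = x)) \<and>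
    (\<forall>x. lss M (zer M) x \<or> zer M = x)"

text \<open>The induction axiom (universal closure) for phi(x, params), x = index 0.\<close>
definition ind_inst :: "'a str \<Rightarrow> fm \<Rightarrow> bool" where
  "ind_inst M p \<longleftrightarrow> (\<forall>e.
     (sat M (case_nat (zer M) e) p \<and>
      (\<forall>a. sat M (case_nat a e) p \<longrightarrow> sat M (case_nat (pls M a (one M)) e) p))
     \<longrightarrow> (\<forall>a. sat M (case_nat a e) p))"

definition IDelta0 :: "'a str \<Rightarrow> bool" where
  "IDelta0 M \<longleftrightarrow> PAminus M \<and> (\<forall>p. delta0 p \<longrightarrow> ind_inst M p)"

definition ISigma :: "nat \<Rightarrow> 'a str \<Rightarrow> bool" where
  "ISigma k M \<longleftrightarrow> PAminus M \<and> (\<forall>p. sigma k p \<longrightarrow> ind_inst M p)"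

text \<open>WR phi for phi(x,y, params): y = index 0, x = index 1; a, b fresh.
  forall a. (forall x. exists y<a. phi) --> exists y<a. forall b. exists x>b. phi\<close>
definition WR_inst :: "'a str \<Rightarrow> fm \<Rightarrow> bool" where
  "WR_inst M p \<longleftrightarrow> (\<forall>e a.
     (\<forall>x. \<exists>y. lss M y a \<and> sat M (case_nat y (case_nat x e)) p)
     \<longrightarrow> (\<exists>y. lss M y a \<and> (\<forall>b. \<exists>x. lss M b x \<and> sat M (case_nat y (case_nat x e)) p)))"

definition WR_SigmaPi :: "nat \<Rightarrow> 'a str \<Rightarrow> bool" where
  "WR_SigmaPi n M \<longleftrightarrow> IDelta0 M \<and>
     (\<forall>p q. sigma n p \<and> pi n q \<longrightarrow> WR_inst M (Conj p q))"

end

theory Submission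
  imports Defs
begin


fun tsub :: "(nat \<Rightarrow> trm) \<Rightarrow> trm \<Rightarrow> trm" where
  "tsub s (Var i) = s i"
| "tsub s Zero = Zero"
| "tsub s One = One"
| "tsub s (Plus a b) = Plus (tsub s a) (tsub s b)"
| "tsub s (Times a b) = Times (tsub s a) (tsub s b)"

lemma evt_tsub: "evt M e (tsub s t) = evt M (\<lambda>i. evt M e (s i)) t"
  by (induction t) auto

definition up :: "(nat \<Rightarrow> trm) \<Rightarrow> nat \<Rightarrow> trm" where
  "up s = case_nat (Var 0) (\<lambda>i. tsub (Var \<circ> Suc) (s i))"

fun sub :: "(nat \<Rightarrow> trm) \<Rightarrow> fm \<Rightarrow> fm" where
  "sub s (Eq a b) = Eq (tsub s a) (tsub s b)"
| "sub s (Lt a b) = Lt (tsub s a) (tsub s b)"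
| "sub s (Neg p) = Neg (sub s p)"
| "sub s (Conj p q) = Conj (sub s p) (sub s q)"
| "sub s (Disj p q) = Disj (sub s p) (sub s q)"
| "sub s (Imp p q) = Imp (sub s p) (sub s q)"
| "sub s (Ex p) = Ex (sub (up s) p)"
| "sub s (All p) = All (sub (up s) p)"
| "sub s (BEx t p) = BEx (tsub s t) (sub (up s) p)"
| "sub s (BAll t p) = BAll (tsub s t) (sub (up s) p)"

lemma env_up: "(\<lambda>i. evt M (case_nat a e) (up s i)) = case_nat a (\<lambda>i. evt M e (s i))"
proof
  fix i show "evt M (case_nat a e) (up s i) = case_nat a (\<lambda>i. evt M e (s i)) i"
    by (cases i) (auto simp: up_def evt_tsub)
qed

lemma sat_sub: "sat M e (sub s p) = sat M (\<lambda>i. evt M e (s i)) p"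
  by (induction p arbitrary: e s) (auto simp: evt_tsub env_up)

lemma delta0_sub: "delta0 p \<Longrightarrow> delta0 (sub s p)"
  by (induction p arbitrary: s rule: delta0.induct) (auto intro: delta0.intros)

lemma sigma_pi_sub:
  "sigma n p \<Longrightarrow> (\<forall>s. sigma n (sub s p))"
  "pi n p \<Longrightarrow> (\<forall>s. pi n (sub s p))"
  by (induction n p and n p rule: sigma_pi.inducts)
     (auto intro: sigma_pi.intros delta0_sub)

fun dual :: "fm \<Rightarrow> fm" where
  "dual (Ex p) = All (dual p)"
| "dual (All p) = Ex (dual p)"
| "dual p = Neg p"

lemma sat_dual: "sat M e (dual p) = (\<not> sat M e p)"
  by (induction p arbitrary: e rule: dual.induct) auto

lemma delta0_dual: "delta0 p \<Longrightarrow> dual p = Neg p"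
  by (cases rule: delta0.cases) auto

lemma sigma_pi_dual:
  "sigma n p \<Longrightarrow> pi n (dual p)"
  "pi n p \<Longrightarrow> sigma n (dual p)"
  by (induction n p and n p rule: sigma_pi.inducts)
     (auto intro: sigma_pi.intros delta0.intros simp: delta0_dual)

fun disjd :: "fm \<Rightarrow> fm \<Rightarrow> fm" where
  "disjd (Ex p) d = Ex (disjd p (sub (Var \<circ> Suc) d))"
| "disjd (All p) d = All (disjd p (sub (Var \<circ> Suc) d))"
| "disjd p d = Disj p d"

lemma sat_disjd: "sat M e (disjd p d) = (sat M e p \<or> sat M e d)"
  by (induction p d arbitrary: e rule: disjd.induct) (auto simp: sat_sub)

lemma delta0_disjd: "delta0 p \<Longrightarrow> disjd p d = Disj p d"
  by (cases rule: delta0.cases) auto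

lemma sigma_pi_disjd:
  "sigma n p \<Longrightarrow> (\<forall>d. delta0 d \<longrightarrow> sigma n (disjd p d))"
  "pi n p \<Longrightarrow> (\<forall>d. delta0 d \<longrightarrow> pi n (disjd p d))"
  by (induction n p and n p rule: sigma_pi.inducts)
     (auto intro: sigma_pi.intros delta0.intros delta0_sub simp: delta0_disjd)

lemma sigma_pi_mono:
  "sigma n p \<Longrightarrow> sigma (Suc n) p"
  "pi n p \<Longrightarrow> pi (Suc n) p"
  by (induction n p and n p rule: sigma_pi.inducts) (auto intro: sigma_pi.intros)

lemma sigma_mono_le: "sigma m p \<Longrightarrow> m \<le> n \<Longrightarrow> sigma n p"
  by (induction n) (auto simp: le_Suc_eq intro: sigma_pi_mono)

lemma pi_mono_le: "pi m p \<Longrightarrow> m \<le> n \<Longrightarrow> pi n p"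
  by (induction n) (auto simp: le_Suc_eq intro: sigma_pi_mono)

lemma sigma0: "sigma 0 p \<Longrightarrow> delta0 p"
  by (cases rule: sigma.cases) auto

lemma pi0: "pi 0 p \<Longrightarrow> delta0 p"
  by (cases rule: pi.cases) auto

section \<open>Blocks of quantifiers\<close>

fun exs :: "nat \<Rightarrow> fm \<Rightarrow> fm" where
  "exs 0 p = p"
| "exs (Suc k) p = Ex (exs k p)"

fun alls :: "nat \<Rightarrow> fm \<Rightarrow> fm" where
  "alls 0 p = p"
| "alls (Suc k) p = All (alls k p)"

fun bexs :: "nat \<Rightarrow> nat \<Rightarrow> fm \<Rightarrow> fm" where
  "bexs 0 j p = p"
| "bexs (Suc k) j p = BEx (Var j) (bexs k (Suc j) p)"

definition shift :: "'a list \<Rightarrow> (nat \<Rightarrow> 'a) \<Rightarrow> nat \<Rightarrow> 'a" where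
  "shift ws e i = (if i < length ws then ws ! i else e (i - length ws))"

lemma shift_snoc: "shift ws (case_nat a e) = shift (ws @ [a]) e"
proof
  fix i show "shift ws (case_nat a e) i = shift (ws @ [a]) e i"
    apply (cases "i < length ws"; cases "i = length ws")
       apply (auto simp: shift_def nth_append split: nat.split)
    apply (rule arg_cong[where f=e]) apply arith done
qed

lemma ex_snoc: "(\<exists>ws. length ws = Suc k \<and> P ws) = (\<exists>a ws. length ws = k \<and> P (ws @ [a]))"
  by (metis length_Suc_conv_rev)

lemma all_snoc: "(\<forall>ws. length ws = Suc k \<longrightarrow> P ws) = (\<forall>a ws. length ws = k \<longrightarrow> P (ws @ [a]))"
  by (metis length_Suc_conv_rev)

lemma sat_exs: "sat M e (exs k p) = (\<exists>ws. length ws = k \<and> sat M (shift ws e) p)"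
proof (induction k arbitrary: e)
  case 0 then show ?case by (simp add: shift_def)
next
  case (Suc k) then show ?case by (simp add: ex_snoc shift_snoc)
qed

lemma sat_alls: "sat M e (alls k p) = (\<forall>ws. length ws = k \<longrightarrow> sat M (shift ws e) p)"
proof (induction k arbitrary: e)
  case 0 then show ?case by (simp add: shift_def)
next
  case (Suc k) then show ?case by (simp add: all_snoc shift_snoc)
qed

lemma sat_bexs: "sat M e (bexs k j p) =
   (\<exists>ws. length ws = k \<and> (\<forall>w\<in>set ws. lss M w (e j)) \<and> sat M (shift ws e) p)"
proof (induction k arbitrary: e j)
  case 0 then show ?case by (simp add: shift_def)
next
  case (Suc k) then show ?case by (auto simp add: ex_snoc shift_snoc)
qed

lemma sigma_exs: "pi m p \<Longrightarrow> sigma (Suc m) (exs k p)"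
  by (induction k) (auto intro: sigma_pi.intros)

lemma pi_alls: "sigma m p \<Longrightarrow> pi (Suc m) (alls k p)"
  by (induction k) (auto intro: sigma_pi.intros)

lemma normal_forms:
  "sigma n p \<Longrightarrow> (\<forall>m. n = Suc m \<longrightarrow> (\<exists>k q. p = exs k q \<and> pi m q))"
  "pi n p \<Longrightarrow> (\<forall>m. n = Suc m \<longrightarrow> (\<exists>k q. p = alls k q \<and> sigma m q))"
proof (induction n p and n p rule: sigma_pi.inducts)
  case (1 p n) then show ?case by (metis exs.simps(1) sigma_pi.intros(2))
next
  case (2 p n) then show ?case by (metis alls.simps(1) sigma_pi.intros(1))
next
  case (3 n p) then show ?case by (metis exs.simps(1) nat.inject)
next
  case (4 n p) then show ?case by (metis alls.simps(1) nat.inject)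
next
  case (5 n p) then show ?case by (metis exs.simps(2))
next
  case (6 n p) then show ?case by (metis alls.simps(2))
qed



lemma pa_trans0: "PAminus M \<Longrightarrow> \<forall>x y z. lss M x y \<and> lss M y z \<longrightarrow> lss M x z"
  unfolding PAminus_def by (elim conjE) assumption
lemma pa_trans: "PAminus M \<Longrightarrow> lss M x y \<Longrightarrow> lss M y z \<Longrightarrow> lss M x z"
  using pa_trans0 by blast
lemma pa_irrefl: "PAminus M \<Longrightarrow> \<not> lss M x x"
  unfolding PAminus_def by (elim conjE) (erule allE, assumption)
lemma pa_tri0: "PAminus M \<Longrightarrow> \<forall>x y. lss M x y \<or> x = y \<or> lss M y x"
  unfolding PAminus_def by (elim conjE) assumption
lemma pa_tri: "PAminus M \<Longrightarrow> lss M x y \<or> x = y \<or> lss M y x"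
  using pa_tri0 by blast
lemma pa_mono0: "PAminus M \<Longrightarrow> \<forall>x y z. lss M x y \<longrightarrow> lss M (pls M x z) (pls M y z)"
  unfolding PAminus_def by (elim conjE) assumption
lemma pa_01: "PAminus M \<Longrightarrow> lss M (zer M) (one M)"
  unfolding PAminus_def by (elim conjE) assumption
lemma pa_comm: "PAminus M \<Longrightarrow> \<forall>x y. pls M x y = pls M y x"
  unfolding PAminus_def by (elim conjE) assumption
lemma pa_0: "PAminus M \<Longrightarrow> \<forall>x. pls M x (zer M) = x \<and> tms M x (zer M) = zer M"
  unfolding PAminus_def by (elim conjE) assumption

lemma pa_succ: "PAminus M \<Longrightarrow> lss M u (pls M u (one M))"
proof -
  assume P: "PAminus M"
  then have "lss M (pls M (zer M) u) (pls M (one M) u)"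
    using pa_mono0 pa_01 by blast
  moreover have "pls M (zer M) u = u" "pls M (one M) u = pls M u (one M)"
    using pa_comm[OF P] pa_0[OF P] by metis+
  ultimately show ?thesis by simp
qed

lemma list_bound: "PAminus M \<Longrightarrow> \<exists>B. \<forall>w\<in>set ws. lss M w B \<or> w = B"
proof (induction ws)
  case Nil then show ?case by simp
next
  case (Cons a ws)
  then obtain B where B: "\<forall>w\<in>set ws. lss M w B \<or> w = B" by blast
  show ?case
  proof (cases "lss M B a")
    case True
    have "\<forall>w\<in>set (a # ws). lss M w a \<or> w = a"
    proof
      fix w assume "w \<in> set (a # ws)"
      then have "w = a \<or> lss M w B \<or> w = B" using B by auto
      then show "lss M w a \<or> w = a" using pa_trans[OF Cons.prems, of w B a] True by auto
    qed
    then show ?thesis by blast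
  next
    case False
    then have "lss M a B \<or> a = B" using pa_tri[OF Cons.prems, of a B] by auto
    then show ?thesis using B by auto
  qed
qed

lemma list_bound2: "PAminus M \<Longrightarrow> \<exists>B. \<forall>x. lss M B x \<longrightarrow> (\<forall>w\<in>set ws. lss M w x)"
  using list_bound pa_trans by metis

section \<open>Closure under bounded quantifiers\<close>

definition WRl :: "nat \<Rightarrow> 'a str \<Rightarrow> bool" where
  "WRl n M \<longleftrightarrow> (\<forall>p q. sigma n p \<and> pi n q \<longrightarrow> WR_inst M (Conj p q))"

definition BAsig :: "'a str \<Rightarrow> nat \<Rightarrow> bool" where
  "BAsig M m \<longleftrightarrow> (\<forall>p t. sigma m p \<longrightarrow> (\<exists>p'. sigma m p' \<and> (\<forall>e. sat M e p' = sat M e (BAll t p))))"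

definition BApi :: "'a str \<Rightarrow> nat \<Rightarrow> bool" where
  "BApi M m \<longleftrightarrow> (\<forall>p t. pi m p \<longrightarrow> (\<exists>p'. pi m p' \<and> (\<forall>e. sat M e p' = sat M e (BAll t p))))"

definition BEpi :: "'a str \<Rightarrow> nat \<Rightarrow> bool" where
  "BEpi M m \<longleftrightarrow> (\<forall>p t. pi m p \<longrightarrow> (\<exists>p'. pi m p' \<and> (\<forall>e. sat M e p' = sat M e (BEx t p))))"

lemma BEpi_from: "BAsig M m \<Longrightarrow> BEpi M m"
  unfolding BEpi_def
proof (intro allI impI)
  fix p t assume A: "BAsig M m" and p: "pi m p"
  then obtain q where q: "sigma m q" "\<forall>e. sat M e q = sat M e (BAll t (dual p))"
    using sigma_pi_dual(2) unfolding BAsig_def by blast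
  show "\<exists>p'. pi m p' \<and> (\<forall>e. sat M e p' = sat M e (BEx t p))"
    by (rule exI[of _ "dual q"]) (use q in \<open>auto simp: sat_dual sigma_pi_dual\<close>)
qed

lemma bexs_pi: "BEpi M m \<Longrightarrow> pi m p \<Longrightarrow> \<exists>p'. pi m p' \<and> (\<forall>e. sat M e p' = sat M e (bexs k j p))"
proof (induction k arbitrary: j)
  case 0 then show ?case by auto
next
  case (Suc k)
  then obtain q where q: "pi m q" "\<forall>e. sat M e q = sat M e (bexs k (Suc j) p)" by blast
  then obtain q' where "pi m q'" "\<forall>e. sat M e q' = sat M e (BEx (Var j) q)"
    using Suc.prems unfolding BEpi_def by blast
  then show ?case using q by (intro exI[of _ q']) auto
qed

lemma env_L1: "length ws = k \<Longrightarrow> evt M (shift ws e) (tsub (\<lambda>i. Var (i+k)) t) = evt M e t"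
  by (simp add: evt_tsub shift_def)

lemma env_L2: "length ws = k \<Longrightarrow>
  (\<lambda>i. evt M (case_nat z (shift ws e)) (if i < k then Var (Suc i) else if i = k then Var 0 else Var i))
   = shift ws (case_nat z e)"
proof
  fix i assume "length ws = k"
  then show "evt M (case_nat z (shift ws e)) (if i < k then Var (Suc i) else if i = k then Var 0 else Var i)
    = shift ws (case_nat z e) i"
    apply (cases "i < k"; cases "i = k")
       apply (auto simp: shift_def split: nat.split)
    apply (rule arg_cong[where f=e]) apply arith done
qed

lemma env_L3: "length ws = k \<Longrightarrow>
  (\<lambda>i. evt M (shift ws (case_nat z (case_nat b e))) (if i \<le> k then Var i else Var (Suc i)))
   = shift ws (case_nat z e)"
proof
  fix i assume L: "length ws = k"
  show "evt M (shift ws (case_nat z (case_nat b e))) (if i \<le> k then Var i else Var (Suc i))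
    = shift ws (case_nat z e) i"
  proof (cases "i \<le> k")
    case True then show ?thesis using L by (cases "i = k") (auto simp: shift_def)
  next
    case False
    then obtain d where "i = k + Suc d" by (metis add_Suc_right less_imp_Suc_add not_le)
    then show ?thesis using L by (simp add: shift_def)
  qed
qed

lemma easy0: "BApi M 0"
  unfolding BApi_def
  by (metis pi0 delta0.intros(8) sigma_pi.intros(2))

lemma bas0: "BAsig M 0"
  unfolding BAsig_def
  by (metis sigma0 delta0.intros(8) sigma_pi.intros(1))

lemma easy: "BAsig M m \<Longrightarrow> BApi M (Suc m)"
  unfolding BApi_def
proof (intro allI impI)
  fix p t assume A: "BAsig M m" and p: "pi (Suc m) p"
  then obtain k s where ps: "p = alls k s" "sigma m s" using normal_forms(2) by blast
  define f where "f = (\<lambda>i. if i < k then Var (Suc i) else if i = k then Var 0 else Var i)"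
  define t' where "t' = tsub (\<lambda>i. Var (i+k)) t"
  have "sigma m (sub f s)" using ps sigma_pi_sub by blast
  then obtain s' where s': "sigma m s'" "\<forall>e. sat M e s' = sat M e (BAll t' (sub f s))"
    using A unfolding BAsig_def by blast
  show "\<exists>p'. pi (Suc m) p' \<and> (\<forall>e. sat M e p' = sat M e (BAll t p))"
  proof (intro exI[of _ "alls k s'"] conjI allI)
    show "pi (Suc m) (alls k s')" using s' pi_alls by blast
    fix e
    have "sat M e (alls k s') = (\<forall>ws. length ws = k \<longrightarrow> (\<forall>z. lss M z (evt M e t) \<longrightarrow>
            sat M (shift ws (case_nat z e)) s))"
      using s' by (simp add: sat_alls sat_sub t'_def env_L1 env_L2 f_def cong: conj_cong)
    also have "\<dots> = sat M e (BAll t p)"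
      using ps by (auto simp: sat_alls)
    finally show "sat M e (alls k s') = sat M e (BAll t p)" .
  qed
qed

lemma hard:
  assumes PA: "PAminus M" and W: "WRl m M" and BS: "BAsig M m" and BP: "BApi M m"
  shows "BAsig M (Suc m)"
  unfolding BAsig_def
proof (intro allI impI)
  fix p t assume p: "sigma (Suc m) p"
  then obtain k th where ps: "p = exs k th" "pi m th" using normal_forms(1) by blast
  define g where "g = (\<lambda>i. if i \<le> k then Var i else Var (Suc i))"
  have "pi m (sub g th)" using ps sigma_pi_sub by blast
  then obtain c0 where c0: "pi m c0" "\<forall>e. sat M e c0 = sat M e (bexs k 1 (sub g th))"
    using bexs_pi[OF BEpi_from[OF BS]] by blast
  have c0s: "sat M (case_nat z (case_nat b e)) c0 =
     (\<exists>ws. length ws = k \<and> (\<forall>w\<in>set ws. lss M w b) \<and> sat M (shift ws (case_nat z e)) th)" for z b e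
    using c0 by (auto simp: sat_bexs sat_sub g_def env_L3 cong: conj_cong)
  obtain c1 where c1: "pi m c1" "\<forall>e. sat M e c1 = sat M e (BAll (tsub (Var \<circ> Suc) t) c0)"
    using BP c0 unfolding BApi_def by blast
  show "\<exists>p'. sigma (Suc m) p' \<and> (\<forall>e. sat M e p' = sat M e (BAll t p))"
  proof (intro exI[of _ "Ex c1"] conjI allI)
    show "sigma (Suc m) (Ex c1)" using c1 by (auto intro: sigma_pi.intros)
    fix e
    define T where "T = evt M e t"
    have L: "sat M e (Ex c1) = (\<exists>b. \<forall>z. lss M z T \<longrightarrow> sat M (case_nat z (case_nat b e)) c0)"
      using c1 by (simp add: evt_tsub T_def)
    have R: "sat M e (BAll t p) = (\<forall>z. lss M z T \<longrightarrow>
       (\<exists>ws. length ws = k \<and> sat M (shift ws (case_nat z e)) th))"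
      using ps by (simp add: sat_exs T_def)
    show "sat M e (Ex c1) = sat M e (BAll t p)"
    proof
      assume "sat M e (Ex c1)" then show "sat M e (BAll t p)" unfolding L R c0s by blast
    next
      assume H: "sat M e (BAll t p)"
      show "sat M e (Ex c1)"
      proof (rule ccontr)
        assume N: "\<not> sat M e (Ex c1)"
        have "WR_inst M (Conj (dual c0) (Eq Zero Zero))"
          using W[unfolded WRl_def, rule_format, of "dual c0" "Eq Zero Zero"]
            sigma_pi_dual(2)[OF c0(1)] sigma_pi.intros(2)[OF delta0.intros(1)] by blast
        then have "(\<forall>x. \<exists>y. lss M y T \<and> sat M (case_nat y (case_nat x e)) (Conj (dual c0) (Eq Zero Zero)))
            \<longrightarrow> (\<exists>y. lss M y T \<and> (\<forall>b. \<exists>x. lss M b x \<and> sat M (case_nat y (case_nat x e)) (Conj (dual c0) (Eq Zero Zero))))"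
          unfolding WR_inst_def by blast
        moreover have "\<forall>x. \<exists>y. lss M y T \<and> sat M (case_nat y (case_nat x e)) (Conj (dual c0) (Eq Zero Zero))"
          using N unfolding L by (auto simp: sat_dual)
        ultimately obtain y where y: "lss M y T" "\<forall>b. \<exists>x. lss M b x \<and> \<not> sat M (case_nat y (case_nat x e)) c0"
          by (auto simp: sat_dual)
        obtain ws where ws: "length ws = k" "sat M (shift ws (case_nat y e)) th"
          using H y(1) unfolding R by blast
        obtain B where B: "\<forall>x. lss M B x \<longrightarrow> (\<forall>w\<in>set ws. lss M w x)"
          using list_bound2[OF PA] by blast
        obtain x where "lss M B x" "\<not> sat M (case_nat y (case_nat x e)) c0" using y(2) by blast
        then show False using B ws unfolding c0s by blast
      qed
    qed
  qed
qed

lemma closure_all: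
  assumes PA: "PAminus M" and W: "\<forall>m'\<le>N. WRl m' M"
  shows "m \<le> N \<Longrightarrow> BAsig M m \<and> BApi M m"
proof (induction m)
  case 0 then show ?case using easy0 bas0 by blast
next
  case (Suc m)
  then have "BAsig M m \<and> BApi M m" by simp
  moreover have "WRl m M" using W Suc.prems by simp
  ultimately show ?case using easy[of M m] hard[OF PA, of m] by blast
qed



definition IS :: "nat \<Rightarrow> 'a str \<Rightarrow> bool" where
  "IS n M \<longleftrightarrow> (\<forall>p. sigma n p \<longrightarrow> ind_inst M p)"

definition IP :: "nat \<Rightarrow> 'a str \<Rightarrow> bool" where
  "IP n M \<longleftrightarrow> (\<forall>p. pi n p \<longrightarrow> ind_inst M p)"

lemma env_L4: "length ws = k \<Longrightarrow>
  (\<lambda>i. evt M (shift ws (case_nat y (case_nat x (case_nat c e)))) (if i \<le> k then Var i else Var (i+2)))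
   = shift ws (case_nat y e)"
proof
  fix i assume L: "length ws = k"
  show "evt M (shift ws (case_nat y (case_nat x (case_nat c e)))) (if i \<le> k then Var i else Var (i+2))
    = shift ws (case_nat y e) i"
  proof (cases "i \<le> k")
    case True then show ?thesis using L by (cases "i = k") (auto simp: shift_def)
  next
    case False
    then obtain d where "i = k + Suc d" by (metis add_Suc_right less_imp_Suc_add not_le)
    then show ?thesis using L by (simp add: shift_def)
  qed
qed

lemma env_s1: "(\<lambda>i. evt M (case_nat y (case_nat x E)) (case_nat (Plus (Var 0) One) (\<lambda>j. Var (Suc j)) i))
   = case_nat (pls M y (one M)) (case_nat x E)"
proof
  fix i show "evt M (case_nat y (case_nat x E)) (case_nat (Plus (Var 0) One) (\<lambda>j. Var (Suc j)) i)
   = case_nat (pls M y (one M)) (case_nat x E) i"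
    by (cases i) auto
qed

lemma sig_step:
  assumes PA: "PAminus M" and W: "WRl n M" and BS: "BAsig M n" and IPn: "IP n M"
  shows "IS (Suc n) M"
  unfolding IS_def
proof (intro allI impI)
  fix psi assume "sigma (Suc n) psi"
  then obtain k th where ps: "psi = exs k th" "pi n th" using normal_forms(1) by blast
  show "ind_inst M psi"
    unfolding ind_inst_def
  proof (intro allI impI)
    fix e c
    assume H: "sat M (case_nat (zer M) e) psi \<and>
      (\<forall>a. sat M (case_nat a e) psi \<longrightarrow> sat M (case_nat (pls M a (one M)) e) psi)"
    define Psi where "Psi y = sat M (case_nat y e) psi" for y
    have Psi_eq: "Psi y = (\<exists>ws. length ws = k \<and> sat M (shift ws (case_nat y e)) th)" for y
      unfolding Psi_def ps by (simp add: sat_exs)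
    have base: "Psi (zer M)" and step: "\<And>a. Psi a \<Longrightarrow> Psi (pls M a (one M))"
      using H unfolding Psi_def by auto
    show "sat M (case_nat c e) psi"
    proof (rule ccontr)
      assume N0: "\<not> sat M (case_nat c e) psi"
      then have N: "\<not> Psi c" unfolding Psi_def .
      define E3 where "E3 x y = case_nat y (case_nat x (case_nat c e))" for x y
      define Qs where "Qs x y = (\<exists>ws. length ws = k \<and> (\<forall>w\<in>set ws. lss M w x) \<and>
          sat M (shift ws (case_nat y e)) th)" for x y
      define Rs where "Rs x y = (Qs x y \<or> y = zer M)" for x y
      define g2 where "g2 = (\<lambda>i. if i \<le> k then Var i else Var (i+2))"
      have "pi n (sub g2 th)" using ps sigma_pi_sub by blast
      then obtain q0 where q0: "pi n q0" "\<forall>E. sat M E q0 = sat M E (bexs k 1 (sub g2 th))"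
        using bexs_pi[OF BEpi_from[OF BS]] by blast
      have q0s: "sat M (E3 x y) q0 = Qs x y" for x y
        using q0 by (auto simp: sat_bexs sat_sub g2_def env_L4 E3_def Qs_def cong: conj_cong)
      define q1 where "q1 = disjd q0 (Eq (Var 0) Zero)"
      have q1: "pi n q1" unfolding q1_def using sigma_pi_disjd(2)[OF q0(1)] delta0.intros(1) by blast
      have q1s: "sat M (E3 x y) q1 = Rs x y" for x y
        unfolding q1_def Rs_def by (simp add: sat_disjd q0s) (simp add: E3_def)
      define p1 where "p1 = sub (case_nat (Plus (Var 0) One) (\<lambda>j. Var (Suc j))) (dual q1)"
      have p1: "sigma n p1" unfolding p1_def using sigma_pi_dual(2)[OF q1] sigma_pi_sub by blast
      have p1s: "sat M (E3 x y) p1 = (\<not> Rs x (pls M y (one M)))" for x y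
        unfolding p1_def by (simp add: sat_sub sat_dual E3_def env_s1 q1s[unfolded E3_def])
      have Qmono: "Psi y \<Longrightarrow> \<exists>B. \<forall>x. lss M B x \<longrightarrow> Qs x y" for y
      proof -
        assume "Psi y"
        then obtain ws where ws: "length ws = k" "sat M (shift ws (case_nat y e)) th"
          unfolding Psi_eq by blast
        obtain B where "\<forall>x. lss M B x \<longrightarrow> (\<forall>w\<in>set ws. lss M w x)" using list_bound2[OF PA] by blast
        then show ?thesis using ws unfolding Qs_def by blast
      qed
      have QPsi: "Qs x y \<Longrightarrow> Psi y" for x y unfolding Qs_def Psi_eq by blast
      have c0: "c \<noteq> zer M" using N base by auto
      have trans: "\<exists>y. lss M y c \<and> \<not> Rs x (pls M y (one M)) \<and> Rs x y" for x
      proof (rule ccontr)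
        assume NT: "\<not> ?thesis"
        define S where "S = disjd q1 (Lt (Var 2) (Var 0))"
        have "pi n S" unfolding S_def using sigma_pi_disjd(2)[OF q1] delta0.intros(2) by blast
        then have I: "ind_inst M S" using IPn unfolding IP_def by blast
        have Ss: "sat M (case_nat u (case_nat x (case_nat c e))) S = (Rs x u \<or> lss M c u)" for u
          unfolding S_def using q1s[of x u] by (simp add: sat_disjd E3_def)
        have "\<forall>u. sat M (case_nat u (case_nat x (case_nat c e))) S"
        proof (rule mp[OF spec[OF I[unfolded ind_inst_def], of "case_nat x (case_nat c e)"]], intro conjI allI impI)
          show "sat M (case_nat (zer M) (case_nat x (case_nat c e))) S"
            unfolding Ss Rs_def by simp
          fix a assume "sat M (case_nat a (case_nat x (case_nat c e))) S"
          then have A: "Rs x a \<or> lss M c a" unfolding Ss .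
          have sa: "lss M a (pls M a (one M))" using pa_succ[OF PA] .
          show "sat M (case_nat (pls M a (one M)) (case_nat x (case_nat c e))) S"
            unfolding Ss
          proof (cases "lss M c a")
            case True then show "Rs x (pls M a (one M)) \<or> lss M c (pls M a (one M))"
              using pa_trans[OF PA True sa] by blast
          next
            case False
            then have "Rs x a" using A by blast
            moreover have "lss M a c \<or> a = c" using False pa_tri[OF PA, of a c] by blast
            ultimately show "Rs x (pls M a (one M)) \<or> lss M c (pls M a (one M))"
              using NT sa by blast
          qed
        qed
        then have "Rs x c \<or> lss M c c" unfolding Ss by blast
        then show False using pa_irrefl[OF PA] QPsi N c0 unfolding Rs_def by blast
      qed
      have "WR_inst M (Conj p1 q1)" using W p1 q1 unfolding WRl_def by blast
      then have "(\<forall>x. \<exists>y. lss M y c \<and> sat M (case_nat y (case_nat x (case_nat c e))) (Conj p1 q1))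
            \<longrightarrow> (\<exists>y. lss M y c \<and> (\<forall>b. \<exists>x. lss M b x \<and> sat M (case_nat y (case_nat x (case_nat c e))) (Conj p1 q1)))"
        unfolding WR_inst_def by blast
      moreover have "\<forall>x. \<exists>y. lss M y c \<and> sat M (case_nat y (case_nat x (case_nat c e))) (Conj p1 q1)"
        using trans p1s q1s unfolding E3_def by simp
      ultimately obtain y where y: "lss M y c"
        "\<forall>b. \<exists>x. lss M b x \<and> \<not> Rs x (pls M y (one M)) \<and> Rs x y"
        using p1s q1s unfolding E3_def by auto
      obtain x0 where "Rs x0 y" using y(2) by blast
      then have "Psi y" using QPsi base unfolding Rs_def by blast
      then have "Psi (pls M y (one M))" by (rule step)
      then obtain B where B: "\<forall>x. lss M B x \<longrightarrow> Qs x (pls M y (one M))" using Qmono by blast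
      obtain x where "lss M B x" "\<not> Rs x (pls M y (one M))" using y(2) by blast
      then show False using B unfolding Rs_def by blast
    qed
  qed
qed

lemma pi_step:
  assumes PA: "PAminus M" and W: "WRl n M" and BS: "BAsig M n" and ISn: "IS n M"
  shows "IP (Suc n) M"
  unfolding IP_def
proof (intro allI impI)
  fix chi assume "pi (Suc n) chi"
  then obtain k et where ps: "chi = alls k et" "sigma n et" using normal_forms(2) by blast
  show "ind_inst M chi"
    unfolding ind_inst_def
  proof (intro allI impI)
    fix e c
    assume H: "sat M (case_nat (zer M) e) chi \<and>
      (\<forall>a. sat M (case_nat a e) chi \<longrightarrow> sat M (case_nat (pls M a (one M)) e) chi)"
    define Xi where "Xi y = sat M (case_nat y e) chi" for y
    have Xi_eq: "Xi y = (\<forall>ws. length ws = k \<longrightarrow> sat M (shift ws (case_nat y e)) et)" for y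
      unfolding Xi_def ps by (simp add: sat_alls)
    have base: "Xi (zer M)" and step: "\<And>a. Xi a \<Longrightarrow> Xi (pls M a (one M))"
      using H unfolding Xi_def by auto
    show "sat M (case_nat c e) chi"
    proof (rule ccontr)
      assume N0: "\<not> sat M (case_nat c e) chi"
      then have N: "\<not> Xi c" unfolding Xi_def .
      define E3 where "E3 x y = case_nat y (case_nat x (case_nat c e))" for x y
      define Qs where "Qs x y = (\<exists>ws. length ws = k \<and> (\<forall>w\<in>set ws. lss M w x) \<and>
          \<not> sat M (shift ws (case_nat y e)) et)" for x y
      define Rs where "Rs x y = (Qs x y \<or> y = c)" for x y
      define g2 where "g2 = (\<lambda>i. if i \<le> k then Var i else Var (i+2))"
      have "pi n (sub g2 (dual et))" using ps sigma_pi_sub sigma_pi_dual by blast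
      then obtain q0 where q0: "pi n q0" "\<forall>E. sat M E q0 = sat M E (bexs k 1 (sub g2 (dual et)))"
        using bexs_pi[OF BEpi_from[OF BS]] by blast
      have q0s: "sat M (E3 x y) q0 = Qs x y" for x y
        using q0 by (auto simp: sat_bexs sat_sub sat_dual g2_def env_L4 E3_def Qs_def cong: conj_cong)
      define q1 where "q1 = disjd q0 (Eq (Var 0) (Var 2))"
      have q1: "pi n q1" unfolding q1_def using sigma_pi_disjd(2)[OF q0(1)] delta0.intros(1) by blast
      have q1s: "sat M (E3 x y) q1 = Rs x y" for x y
        unfolding q1_def Rs_def by (simp add: sat_disjd q0s) (simp add: E3_def)
      define p2 where "p2 = sub (case_nat (Plus (Var 0) One) (\<lambda>j. Var (Suc j))) q1"
      have p2: "pi n p2" unfolding p2_def using q1 sigma_pi_sub by blast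
      have p2s: "sat M (E3 x y) p2 = Rs x (pls M y (one M))" for x y
        unfolding p2_def by (simp add: sat_sub E3_def env_s1 q1s[unfolded E3_def])
      have p1: "sigma n (dual q1)" using sigma_pi_dual(2)[OF q1] .
      have p1s: "sat M (E3 x y) (dual q1) = (\<not> Rs x y)" for x y
        by (simp add: sat_dual q1s)
      have Qmono: "\<not> Xi y \<Longrightarrow> \<exists>B. \<forall>x. lss M B x \<longrightarrow> Qs x y" for y
      proof -
        assume "\<not> Xi y"
        then obtain ws where ws: "length ws = k" "\<not> sat M (shift ws (case_nat y e)) et"
          unfolding Xi_eq by blast
        obtain B where "\<forall>x. lss M B x \<longrightarrow> (\<forall>w\<in>set ws. lss M w x)" using list_bound2[OF PA] by blast
        then show ?thesis using ws unfolding Qs_def by blast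
      qed
      have QXi: "Qs x y \<Longrightarrow> \<not> Xi y" for x y unfolding Qs_def Xi_eq by blast
      have c0: "zer M \<noteq> c" using N base by auto
      have trans: "\<exists>y. lss M y c \<and> \<not> Rs x y \<and> Rs x (pls M y (one M))" for x
      proof (rule ccontr)
        assume NT: "\<not> ?thesis"
        define S where "S = disjd (dual q1) (Lt (Var 2) (Var 0))"
        have "sigma n S" unfolding S_def using sigma_pi_disjd(1)[OF p1] delta0.intros(2) by blast
        then have I: "ind_inst M S" using ISn unfolding IS_def by blast
        have Ss: "sat M (case_nat u (case_nat x (case_nat c e))) S = (\<not> Rs x u \<or> lss M c u)" for u
          unfolding S_def using p1s[of x u] by (simp add: sat_disjd E3_def)
        have "\<forall>u. sat M (case_nat u (case_nat x (case_nat c e))) S"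
        proof (rule mp[OF spec[OF I[unfolded ind_inst_def], of "case_nat x (case_nat c e)"]], intro conjI allI impI)
          show "sat M (case_nat (zer M) (case_nat x (case_nat c e))) S"
            unfolding Ss Rs_def using QXi base c0 by blast
          fix a assume "sat M (case_nat a (case_nat x (case_nat c e))) S"
          then have A: "\<not> Rs x a \<or> lss M c a" unfolding Ss .
          have sa: "lss M a (pls M a (one M))" using pa_succ[OF PA] .
          show "sat M (case_nat (pls M a (one M)) (case_nat x (case_nat c e))) S"
            unfolding Ss
          proof (cases "lss M c a")
            case True then show "\<not> Rs x (pls M a (one M)) \<or> lss M c (pls M a (one M))"
              using pa_trans[OF PA True sa] by blast
          next
            case False
            then have "\<not> Rs x a" using A by blast
            then have "a \<noteq> c" unfolding Rs_def by blast
            then have "lss M a c" using False pa_tri[OF PA, of a c] by blast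
            then show "\<not> Rs x (pls M a (one M)) \<or> lss M c (pls M a (one M))"
              using NT \<open>\<not> Rs x a\<close> by blast
          qed
        qed
        then have "\<not> Rs x c \<or> lss M c c" unfolding Ss by blast
        then show False using pa_irrefl[OF PA] unfolding Rs_def by blast
      qed
      have "WR_inst M (Conj (dual q1) p2)" using W p1 p2 unfolding WRl_def by blast
      then have "(\<forall>x. \<exists>y. lss M y c \<and> sat M (case_nat y (case_nat x (case_nat c e))) (Conj (dual q1) p2))
            \<longrightarrow> (\<exists>y. lss M y c \<and> (\<forall>b. \<exists>x. lss M b x \<and> sat M (case_nat y (case_nat x (case_nat c e))) (Conj (dual q1) p2)))"
        unfolding WR_inst_def by blast
      moreover have "\<forall>x. \<exists>y. lss M y c \<and> sat M (case_nat y (case_nat x (case_nat c e))) (Conj (dual q1) p2)"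
        using trans p1s p2s unfolding E3_def by simp
      ultimately obtain y where y: "lss M y c"
        "\<forall>b. \<exists>x. lss M b x \<and> \<not> Rs x y \<and> Rs x (pls M y (one M))"
        using p1s p2s unfolding E3_def by auto
      obtain x0 where "Rs x0 (pls M y (one M))" using y(2) by blast
      then have NX: "\<not> Xi (pls M y (one M))" using QXi N unfolding Rs_def by blast
      have "Xi y"
      proof (rule ccontr)
        assume "\<not> Xi y"
        then obtain B where B: "\<forall>x. lss M B x \<longrightarrow> Qs x y" using Qmono by blast
        obtain x where "lss M B x" "\<not> Rs x y" using y(2) by blast
        then show False using B unfolding Rs_def by blast
      qed
      then show False using step NX by blast
    qed
  qed
qed

lemma levels:
  assumes PA: "PAminus M" and D: "IDelta0 M" and W: "\<forall>m\<le>N. WRl m M"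
  shows "m \<le> N \<Longrightarrow> IS m M \<and> IP m M"
proof (induction m)
  case 0
  then show ?case using D unfolding IDelta0_def IS_def IP_def by (blast dest: sigma0 pi0)
next
  case (Suc m)
  then have IH: "IS m M" "IP m M" and mN: "m \<le> N" by auto
  have "WRl m M" using W mN by blast
  moreover have "BAsig M m" using closure_all[OF PA W mN] by blast
  ultimately show ?case using sig_step[OF PA] pi_step[OF PA] IH by blast
qed

theorem lemma5p5:
  fixes M :: "'a str" and n :: nat
  assumes "WR_SigmaPi n M"
  shows "ISigma (Suc n) M"
proof -
  have D: "IDelta0 M" using assms unfolding WR_SigmaPi_def by blast
  then have PA: "PAminus M" unfolding IDelta0_def by blast
  have W: "\<forall>m\<le>n. WRl m M"
    using assms unfolding WR_SigmaPi_def WRl_def by (blast intro: sigma_mono_le pi_mono_le)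
  have "IS n M \<and> IP n M" using levels[OF PA D W] by blast
  moreover have "WRl n M" using W by blast
  moreover have "BAsig M n" using closure_all[OF PA W] by blast
  ultimately have "IS (Suc n) M" using sig_step[OF PA] by blast
  then show ?thesis using PA unfolding ISigma_def IS_def by blast
qed

end
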